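(* Let $m\ge 1$ and $r\ge 1$ be integers, let $x_1,\dots,x_m\in\mathbb{R}^r$ be known covariate vectors such that the $m\times r$ matrix $X=(x_1,\dots,x_m)^T$ has full column rank $r$, and let $D_1,\dots,D_m>0$ be known constants. Consider the hierarchical model $$y_i=\theta_i+e_i,\qquad \theta_i=x_i^T\beta+(1-\delta_i)v_{1i}+\delta_i v_{2i},\qquad i=1,\dots,m,$$ where, given the parameters $\beta\in\mathbb{R}^r$, $A_1,A_2>0$ and $p\in(0,1)$, the random variables $e_i,\delta_i,v_{1i},v_{2i}$ ($i=1,\dots,m$) are mutually independent with $e_i\sim N(0,D_i)$, $v_{1i}\sim N(0,A_1)$, $v_{2i}\sim N(0,A_2)$, and $\delta_i\in\{0,1\}$ with $P(\delta_i=1\mid p)=1-p$. Place on $(\beta,A_1,A_2,p)$ the (possibly improper) prior $$\pi(\beta,A_1,A_2,p)\propto A_1^{-\alpha_1}A_2^{-\alpha_2}\,I(0<A_1<A_2<\infty),\qquad \beta\in\mathbb{R}^r,\ p\in(0,1),$$ i.e. a uniform prior on $\beta\in\mathbb{R}^r$ and on $p\in(0,1)$, where $\alpha_1<1<\alpha_2$ are constants. If (a) $m>r+2(2-\alpha_1-\alpha_2)$ and (b) $2-\alpha_1-\alpha_2>0$, then for every observed data vector $y=(y_1,\dots,y_m)\in\mathbb{R}^m$ the resulting joint posterior distribution of $(\theta_1,\dots,\theta_m,\delta_1,\dots,\delta_m,\beta,A_1,A_2,p)$ given $y$ is proper (the unnormalized posterior has finite, positive total integral).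
   Context: The model is a two-component normal mixture extension of the Fay–Herriot small area model: $y_i$ is a direct survey estimator for small area $i$, $\theta_i$ the small area mean, $D_i$ the known sampling variance. The restriction $A_1<A_2$ in the prior is imposed for identifiability. The condition $\alpha_1<1<\alpha_2$ makes the prior on $(A_1,A_2)$ "partially proper" (conditional prior of $A_2$ given $A_1$ and of $A_1$ given $A_2$ proper). *)

theory Defs
  imports "HOL-Probability.Probability"
begin

text \<open>Rows of X are the covariate vectors x_i; delta i = True means delta_i = 1.
  The v_{1i}, v_{2i} are integrated out: given delta_i, theta_i ~ N(x_i^T beta, A_{delta_i}).\<close>
definition fh_mix_joint ::
  "real^'m \<Rightarrow> real^'r^'m \<Rightarrow> real^'m \<Rightarrow> real \<Rightarrow> real \<Rightarrow>
   real^'m \<Rightarrow> ('m \<Rightarrow> bool) \<Rightarrow> real^'r \<Rightarrow> real \<Rightarrow> real \<Rightarrow> real \<Rightarrow> real" where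
  "fh_mix_joint y X D \<alpha>1 \<alpha>2 \<theta> \<delta> \<beta> A1 A2 p =
     (if 0 < A1 \<and> A1 < A2 \<and> 0 < p \<and> p < 1 then
        (\<Prod>i\<in>UNIV. normal_density (\<theta> $ i) (sqrt (D $ i)) (y $ i) *
           (if \<delta> i then (1 - p) * normal_density ((X *v \<beta>) $ i) (sqrt A2) (\<theta> $ i)
            else p * normal_density ((X *v \<beta>) $ i) (sqrt A1) (\<theta> $ i)))
        * A1 powr (-\<alpha>1) * A2 powr (-\<alpha>2)
      else 0)"

definition fh_mix_total ::
  "real^'m \<Rightarrow> real^'r^'m \<Rightarrow> real^'m \<Rightarrow> real \<Rightarrow> real \<Rightarrow> ennreal" where
  "fh_mix_total y X D \<alpha>1 \<alpha>2 =
     (\<Sum>\<delta>\<in>(UNIV :: ('m \<Rightarrow> bool) set).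
        \<integral>\<^sup>+ z. ennreal (case z of (\<theta>, \<beta>, A1, A2, p) \<Rightarrow> fh_mix_joint y X D \<alpha>1 \<alpha>2 \<theta> \<delta> \<beta> A1 A2 p)
        \<partial>(lborel \<Otimes>\<^sub>M lborel \<Otimes>\<^sub>M lborel \<Otimes>\<^sub>M lborel \<Otimes>\<^sub>M (lborel :: real measure)))"

end

theory Submission
  imports Defs
begin


lemma nd_int:
  assumes "0 < \<sigma>"
  shows "(\<integral>\<^sup>+x. ennreal (normal_density \<mu> \<sigma> x) \<partial>lborel) = 1"
proof -
  have "(\<integral>\<^sup>+x. ennreal (normal_density \<mu> \<sigma> x) \<partial>lborel) = ennreal (\<integral>x. normal_density \<mu> \<sigma> x \<partial>lborel)"
    using assms by (intro nn_integral_eq_integral) (auto intro!: integrable_normal_density)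
  also have "\<dots> = 1" using assms by (simp add: integral_normal_density)
  finally show ?thesis .
qed

lemma nd_le:
  assumes "0 < \<sigma>"
  shows "normal_density \<mu> \<sigma> x \<le> 1 / sqrt (2 * pi * \<sigma>\<^sup>2)"
  using assms unfolding normal_density_def
  by (auto intro!: divide_right_mono)

lemma nd_sym: "normal_density \<mu> \<sigma> x = normal_density x \<sigma> \<mu>"
  unfolding normal_density_def by (simp add: power2_commute)

lemma nn_integral_vec_prod:
  fixes f :: "'n::finite \<Rightarrow> real \<Rightarrow> ennreal"
  assumes [measurable]: "\<And>i. f i \<in> borel_measurable borel"
  shows "(\<integral>\<^sup>+(x::real^'n). (\<Prod>i\<in>UNIV. f i (x $ i)) \<partial>lborel) = (\<Prod>i\<in>UNIV. \<integral>\<^sup>+t. f i t \<partial>lborel)"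
proof -
  define g where "g b = f (axis_index b)" for b :: "real^'n"
  have ai: "axis_index (axis i (1::real)) = i" for i :: 'n
    by (simp add: axis_index_def axis_eq_axis)
  have inj: "inj_on (\<lambda>i::'n. axis i (1::real)) UNIV"
    by (auto simp: inj_on_def axis_eq_axis)
  have B: "(Basis :: (real^'n) set) = (\<lambda>i. axis i 1) ` UNIV"
    by (auto simp: Basis_vec_def)
  have "(\<Prod>i\<in>UNIV. f i (x $ i)) = (\<Prod>b\<in>Basis. g b (x \<bullet> b))" for x :: "real^'n"
    unfolding B by (subst prod.reindex[OF inj]) (simp add: g_def ai cart_eq_inner_axis)
  then have "(\<integral>\<^sup>+(x::real^'n). (\<Prod>i\<in>UNIV. f i (x $ i)) \<partial>lborel) = (\<integral>\<^sup>+(x::real^'n). (\<Prod>b\<in>Basis. g b (x \<bullet> b)) \<partial>lborel)"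
    by simp
  also have "\<dots> = (\<Prod>b\<in>Basis. \<integral>\<^sup>+t. g b t \<partial>lborel)"
    by (rule nn_integral_lborel_prod) (auto simp: g_def)
  also have "\<dots> = (\<Prod>i\<in>UNIV. \<integral>\<^sup>+t. f i t \<partial>lborel)"
    unfolding B by (subst prod.reindex[OF inj]) (simp add: g_def ai)
  finally show ?thesis .
qed

lemma nn_integral_translate:
  fixes c :: "'a::euclidean_space"
  assumes [measurable]: "f \<in> borel_measurable borel"
  shows "(\<integral>\<^sup>+x. f (c + x) \<partial>lborel) = (\<integral>\<^sup>+x. f x \<partial>lborel)"
proof -
  have "(\<integral>\<^sup>+x. f x \<partial>lborel) = (\<integral>\<^sup>+x. f x \<partial>distr lborel borel ((+) c))"
    by (simp add: lborel_distr_plus)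
  also have "\<dots> = (\<integral>\<^sup>+x. f (c + x) \<partial>lborel)"
    by (subst nn_integral_distr) auto
  finally show ?thesis by simp
qed



lemma select_rows:
  fixes X :: "real^'r^'m"
  assumes "rank X = CARD('r)"
  shows "\<exists>\<sigma>::'r \<Rightarrow> 'm. inj \<sigma> \<and> inj ((*v) (\<chi> j. X $ (\<sigma> j)))"
proof -
  have injX: "inj ((*v) X)" using assms full_rank_injective by blast
  obtain B where B: "B \<subseteq> rows X" "independent B" "rows X \<subseteq> span B"
    using maximal_independent_subset by blast
  have "rows X = range (\<lambda>i. row i X)" unfolding rows_def by auto
  then have finR: "finite (rows X)" by simp
  have finB: "finite B" using B(1) finR finite_subset by blast
  have "card B = dim (rows X)" using B basis_card_eq_dim by blast
  also have "\<dots> = CARD('r)" using assms row_rank_def by metis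
  finally have cB: "card B = card (UNIV :: 'r set)" .
  obtain \<tau> where \<tau>: "bij_betw \<tau> (UNIV :: 'r set) B"
    using finite_same_card_bij[OF _ finB] cB by (metis finite)
  have rowX: "row i X = X $ i" for i by (simp add: row_def vec_lambda_eta)
  have ex: "\<exists>i. X $ i = \<tau> j" for j
  proof -
    have "\<tau> j \<in> rows X" using \<tau> B(1) bij_betwE by blast
    then show ?thesis by (auto simp: rows_def rowX)
  qed
  define \<sigma> where "\<sigma> j = (SOME i. X $ i = \<tau> j)" for j
  have s: "X $ (\<sigma> j) = \<tau> j" for j unfolding \<sigma>_def by (rule someI_ex[OF ex])
  have "inj \<sigma>"
  proof (rule injI)
    fix a b assume "\<sigma> a = \<sigma> b"
    then have "\<tau> a = \<tau> b" using s by metis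
    then show "a = b" using \<tau> by (auto simp: bij_betw_def inj_on_def)
  qed
  moreover have "inj ((*v) (\<chi> j. X $ (\<sigma> j)))"
  proof -
    have "linear ((*v) (\<chi> j. X $ (\<sigma> j)))" by (rule matrix_vector_mul_linear)
    moreover have "x = 0" if "(\<chi> j. X $ (\<sigma> j)) *v x = 0" for x
    proof -
      have "\<tau> j \<bullet> x = 0" for j
        using that[unfolded vec_eq_iff] by (simp add: matrix_vector_mul_component s)
      then have "b \<bullet> x = 0" if "b \<in> B" for b
        using that \<tau> by (metis bij_betw_imp_surj_on imageE)
      then have "orthogonal x v" if "v \<in> span B" for v
        using orthogonal_to_span[OF that, of x] \<open>\<And>b. b \<in> B \<Longrightarrow> b \<bullet> x = 0\<close>
        by (simp add: orthogonal_def inner_commute)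
      then have "X $ i \<bullet> x = 0" for i
      proof -
        have "X $ i \<in> span B" using B(3) by (auto simp: rows_def rowX)
        then show ?thesis using \<open>\<And>v. v \<in> span B \<Longrightarrow> orthogonal x v\<close>
          by (metis orthogonal_def inner_commute)
      qed
      then have "X *v x = 0" by (simp add: vec_eq_iff matrix_vector_mul_component)
      then show "x = 0" using injX by (metis injD matrix_vector_mult_0_right)
    qed
    ultimately show ?thesis by (metis linear_injective_0 inj_on_def)
  qed
  ultimately show ?thesis by blast
qed



lemma normsq_vec: "norm (x::real^'n) ^ 2 = (\<Sum>i\<in>UNIV. (x$i)^2)"
proof -
  have "norm x ^ 2 = x \<bullet> x" by (rule power2_norm_eq_inner)
  also have "\<dots> = (\<Sum>i\<in>UNIV. (x$i)^2)" by (simp add: inner_vec_def power2_eq_square)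
  finally show ?thesis .
qed

lemma gauss1_fin:
  assumes "(0::real) < c"
  shows "(\<integral>\<^sup>+t. ennreal (exp (- c * t^2)) \<partial>lborel) < \<infinity>"
proof -
  define s where "s = sqrt (1 / (2*c))"
  have s: "s > 0" "s^2 = 1/(2*c)" using assms by (auto simp: s_def)
  have eq: "exp (- c * t^2) = sqrt (pi / c) * normal_density 0 s t" for t
  proof -
    have a: "2 * pi * s\<^sup>2 = pi / c" using s assms by (simp add: field_simps)
    have b: "-(t - 0)\<^sup>2 / (2 * s\<^sup>2) = - c * t^2" using s assms by (simp add: field_simps)
    have "sqrt (pi / c) > 0" using assms by simp
    then show ?thesis unfolding normal_density_def a b using assms by simp
  qed
  have "(\<integral>\<^sup>+t. ennreal (exp (- c * t^2)) \<partial>lborel)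
      = (\<integral>\<^sup>+t. ennreal (sqrt (pi / c)) * ennreal (normal_density 0 s t) \<partial>lborel)"
    using assms by (intro nn_integral_cong) (simp only: eq, rule ennreal_mult, simp_all)
  also have "\<dots> = ennreal (sqrt (pi / c)) * (\<integral>\<^sup>+t. ennreal (normal_density 0 s t) \<partial>lborel)"
    by (rule nn_integral_cmult) auto
  also have "\<dots> = ennreal (sqrt (pi / c))" using nd_int[OF s(1)] by simp
  finally show ?thesis by simp
qed

lemma gauss_vec_fin:
  assumes "(0::real) < c"
  shows "(\<integral>\<^sup>+(x::real^'n). ennreal (exp (- c * norm x ^ 2)) \<partial>lborel) < \<infinity>"
proof -
  have "ennreal (exp (- c * norm x ^ 2)) = (\<Prod>i\<in>UNIV. ennreal (exp (- c * (x$i)^2)))" for x :: "real^'n"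
    by (simp add: normsq_vec sum_distrib_left exp_sum prod_ennreal sum_negf[symmetric])
  then have "(\<integral>\<^sup>+(x::real^'n). ennreal (exp (- c * norm x ^ 2)) \<partial>lborel)
     = (\<integral>\<^sup>+(x::real^'n). (\<Prod>i\<in>UNIV. (\<lambda>t. ennreal (exp (- c * t^2))) (x$i)) \<partial>lborel)" by simp
  also have "\<dots> = (\<Prod>i\<in>(UNIV::'n set). \<integral>\<^sup>+t. ennreal (exp (- c * t^2)) \<partial>lborel)"
    by (rule nn_integral_vec_prod) simp
  also have "\<dots> < \<infinity>" using gauss1_fin[OF assms] by (simp add: power_less_top_ennreal)
  finally show ?thesis .
qed



lemma nd_sqrt: "0 < d \<Longrightarrow> normal_density \<mu> (sqrt d) x = 1 / sqrt (2 * pi * d) * exp (- (x - \<mu>)\<^sup>2 / (2 * d))"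
  unfolding normal_density_def by simp

lemma beta_bound:
  fixes Y :: "real^'r^'r" and d :: "'r \<Rightarrow> real"
  assumes inj: "inj ((*v) Y)" and d: "\<And>j. d j > 0"
  shows "\<exists>C. C < \<infinity> \<and> (\<forall>c::real^'r. (\<integral>\<^sup>+\<beta>. (\<Prod>j\<in>UNIV. ennreal (normal_density ((Y *v \<beta>)$j) (sqrt (d j)) (c$j))) \<partial>lborel) \<le> C)"
proof -
  have lin: "linear ((*v) Y)" by (rule matrix_vector_mul_linear)
  obtain B where B: "B > 0" "\<And>x. B * norm x \<le> norm (Y *v x)"
    using linear_inj_bounded_below_pos[OF lin inj] by blast
  have surj: "surj ((*v) Y)"
    using inj full_rank_injective full_rank_surjective by blast
  define Dm where "Dm = Max (range d)"
  have Dm: "d j \<le> Dm" for j unfolding Dm_def by simp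
  have Dm0: "Dm > 0" using Dm[of undefined] d[of undefined] by linarith
  define K where "K = (\<Prod>j\<in>UNIV. 1 / sqrt (2 * pi * d j))"
  have K0: "K \<ge> 0" unfolding K_def using d by (intro prod_nonneg) (simp add: less_imp_le)
  define cc where "cc = B^2 / (2 * Dm)"
  have cc: "cc > 0" using B Dm0 by (simp add: cc_def)
  define G where "G = (\<integral>\<^sup>+(x::real^'r). ennreal (exp (- cc * norm x ^ 2)) \<partial>lborel)"
  have G: "G < \<infinity>" unfolding G_def by (rule gauss_vec_fin[OF cc])
  show ?thesis
  proof (intro exI conjI allI)
    show "ennreal K * G < \<infinity>" using G by (simp add: ennreal_mult_less_top)
    fix c :: "real^'r"
    obtain \<beta>0 where b0: "c = Y *v \<beta>0" using surj by (metis surjD)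
    have pw: "(\<Prod>j\<in>UNIV. normal_density ((Y *v \<beta>)$j) (sqrt (d j)) (c$j))
              \<le> K * exp (- cc * norm ((- \<beta>0) + \<beta>) ^ 2)" for \<beta>
    proof -
      have "(\<Prod>j\<in>UNIV. normal_density ((Y *v \<beta>)$j) (sqrt (d j)) (c$j))
          \<le> (\<Prod>j\<in>UNIV. 1 / sqrt (2 * pi * d j) * exp (- (c$j - (Y *v \<beta>)$j)\<^sup>2 / (2 * Dm)))"
      proof (rule prod_mono, safe)
        fix j
        show "0 \<le> normal_density ((Y *v \<beta>)$j) (sqrt (d j)) (c$j)" by simp
        have "(c$j - (Y *v \<beta>)$j)\<^sup>2 / (2 * Dm) \<le> (c$j - (Y *v \<beta>)$j)\<^sup>2 / (2 * d j)"
          using d[of j] Dm[of j] by (intro divide_left_mono) auto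
        then show "normal_density ((Y *v \<beta>)$j) (sqrt (d j)) (c$j)
          \<le> 1 / sqrt (2 * pi * d j) * exp (- (c$j - (Y *v \<beta>)$j)\<^sup>2 / (2 * Dm))"
          using d[of j] by (simp add: nd_sqrt divide_right_mono)
      qed
      also have "\<dots> = K * exp (- (norm (Y *v (\<beta>0 - \<beta>)))\<^sup>2 / (2 * Dm))"
      proof -
        have "norm (Y *v (\<beta>0 - \<beta>)) ^ 2 = (\<Sum>j\<in>UNIV. (c$j - (Y *v \<beta>)$j)\<^sup>2)"
          by (simp add: normsq_vec b0 matrix_vector_mult_diff_distrib)
        moreover have "(\<Prod>j\<in>UNIV. 1 / sqrt (2 * pi * d j) * exp (- (c$j - (Y *v \<beta>)$j)\<^sup>2 / (2 * Dm)))
            = K * (\<Prod>j\<in>UNIV. exp (- (c$j - (Y *v \<beta>)$j)\<^sup>2 / (2 * Dm)))"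
          unfolding K_def by (rule prod.distrib)
        moreover have "(\<Prod>j\<in>UNIV. exp (- (c$j - (Y *v \<beta>)$j)\<^sup>2 / (2 * Dm)))
            = exp (\<Sum>j\<in>UNIV. - (c$j - (Y *v \<beta>)$j)\<^sup>2 / (2 * Dm))"
          by (simp add: exp_sum)
        moreover have "(\<Sum>j\<in>UNIV. - (c$j - (Y *v \<beta>)$j)\<^sup>2 / (2 * Dm))
            = - (\<Sum>j\<in>UNIV. (c$j - (Y *v \<beta>)$j)\<^sup>2) / (2 * Dm)"
          by (simp add: sum_negf sum_divide_distrib)
        ultimately show ?thesis by simp
      qed
      also have "\<dots> \<le> K * exp (- cc * norm ((- \<beta>0) + \<beta>) ^ 2)"
      proof (intro mult_left_mono K0)
        have "B * norm (\<beta>0 - \<beta>) \<le> norm (Y *v (\<beta>0 - \<beta>))" by (rule B(2))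
        then have "(B * norm (\<beta>0 - \<beta>))\<^sup>2 \<le> norm (Y *v (\<beta>0 - \<beta>)) ^ 2"
          using B(1) by (intro power_mono) auto
        then have "cc * norm ((- \<beta>0) + \<beta>) ^ 2 \<le> norm (Y *v (\<beta>0 - \<beta>)) ^ 2 / (2 * Dm)"
          using Dm0 by (simp add: cc_def power_mult_distrib field_simps norm_minus_commute)
        then show "exp (- (norm (Y *v (\<beta>0 - \<beta>)))\<^sup>2 / (2 * Dm)) \<le> exp (- cc * norm ((- \<beta>0) + \<beta>) ^ 2)"
          by simp
      qed
      finally show ?thesis .
    qed
    have "(\<integral>\<^sup>+\<beta>. (\<Prod>j\<in>UNIV. ennreal (normal_density ((Y *v \<beta>)$j) (sqrt (d j)) (c$j))) \<partial>lborel)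
       \<le> (\<integral>\<^sup>+\<beta>. ennreal K * ennreal (exp (- cc * norm ((- \<beta>0) + \<beta>) ^ 2)) \<partial>lborel)"
    proof (rule nn_integral_mono)
      fix \<beta> :: "real^'r"
      have "(\<Prod>j\<in>UNIV. ennreal (normal_density ((Y *v \<beta>)$j) (sqrt (d j)) (c$j)))
          = ennreal (\<Prod>j\<in>UNIV. normal_density ((Y *v \<beta>)$j) (sqrt (d j)) (c$j))"
        by (simp add: prod_ennreal)
      also have "\<dots> \<le> ennreal (K * exp (- cc * norm ((- \<beta>0) + \<beta>) ^ 2))"
        using pw by (rule ennreal_leI)
      finally show "(\<Prod>j\<in>UNIV. ennreal (normal_density ((Y *v \<beta>)$j) (sqrt (d j)) (c$j)))
          \<le> ennreal K * ennreal (exp (- cc * norm ((- \<beta>0) + \<beta>) ^ 2))"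
        using K0 by (simp add: ennreal_mult)
    qed
    also have "\<dots> = ennreal K * (\<integral>\<^sup>+\<beta>. ennreal (exp (- cc * norm ((- \<beta>0) + \<beta>) ^ 2)) \<partial>lborel)"
      by (rule nn_integral_cmult) simp
    also have "(\<integral>\<^sup>+\<beta>. ennreal (exp (- cc * norm ((- \<beta>0) + \<beta>) ^ 2)) \<partial>lborel) = G"
      unfolding G_def by (rule nn_integral_translate[where f = "\<lambda>x. ennreal (exp (- cc * norm x ^ 2))"]) simp
    finally show "(\<integral>\<^sup>+\<beta>. (\<Prod>j\<in>UNIV. ennreal (normal_density ((Y *v \<beta>)$j) (sqrt (d j)) (c$j))) \<partial>lborel) \<le> ennreal K * G" .
  qed
qed



lemma mv_nth_meas[measurable]: "(\<lambda>x. (A *v x) $ i) \<in> borel_measurable (borel :: (real^'n) measure)"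
  unfolding matrix_vector_mult_def by simp

lemma vec_nth_meas[measurable (raw)]:
  "f \<in> borel_measurable M \<Longrightarrow> (\<lambda>x. (f x :: real^'n) $ i) \<in> borel_measurable M"
  by (rule measurable_compose[OF _ borel_measurable_nth])

lemma mv_nth_meas'[measurable (raw)]:
  "f \<in> borel_measurable M \<Longrightarrow> (\<lambda>x. (A *v (f x :: real^'n)) $ i) \<in> borel_measurable M"
  by (rule measurable_compose[OF _ mv_nth_meas])

lemma nd_meas[measurable (raw)]:
  assumes "f \<in> borel_measurable M" "g \<in> borel_measurable M" "h \<in> borel_measurable M"
  shows "(\<lambda>x. normal_density (f x) (g x) (h x)) \<in> borel_measurable M"
  using assms unfolding normal_density_def by measurable

lemma nd_shift1: "normal_density (\<mu> + z) s y = normal_density \<mu> s (y - z)"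
  unfolding normal_density_def by (simp add: algebra_simps)

lemma nd_shift2: "normal_density \<mu> s (\<mu> + z) = normal_density 0 s z"
  unfolding normal_density_def by (simp add: algebra_simps)

lemma inner_bound:
  fixes X :: "real^'r^'m" and D y :: "real^'m" and a w :: "'m \<Rightarrow> real" and \<sigma> :: "'r \<Rightarrow> 'm"
  assumes D: "\<And>i. D$i > 0" and a: "\<And>i. a i > 0" and w: "\<And>i. 0 \<le> w i" "\<And>i. w i \<le> 1"
    and inj\<sigma>: "inj \<sigma>"
    and C0: "\<And>c::real^'r. (\<integral>\<^sup>+\<beta>. (\<Prod>j\<in>UNIV. ennreal (normal_density (((\<chi> j. X $ (\<sigma> j)) *v \<beta>)$j) (sqrt (D$(\<sigma> j))) (c$j))) \<partial>lborel) \<le> C0"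
  shows "(\<integral>\<^sup>+\<beta>. \<integral>\<^sup>+\<theta>. ennreal (\<Prod>i\<in>UNIV. normal_density (\<theta>$i) (sqrt (D$i)) (y$i) * (w i * normal_density ((X *v \<beta>)$i) (sqrt (a i)) (\<theta>$i))) \<partial>lborel \<partial>lborel)
         \<le> C0 * (\<Prod>i\<in>UNIV. ennreal (if i \<in> range \<sigma> then 1 else 1 / sqrt (2 * pi * max (a i) (D$i))))"
proof -
  define Y where "Y = (\<chi> j. X $ (\<sigma> j))"
  have Y: "(Y *v \<beta>)$j = (X *v \<beta>)$(\<sigma> j)" for \<beta> j
    by (simp add: Y_def matrix_vector_mult_def)
  define T where "T = range \<sigma> \<union> {i. a i < D$i}"
  define t where "t \<beta> = (\<chi> i. if i \<in> T then (X *v \<beta>)$i else 0)" for \<beta>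
  define F where "F \<beta> \<theta> = (\<Prod>i\<in>UNIV. normal_density (\<theta>$i) (sqrt (D$i)) (y$i) * (w i * normal_density ((X *v \<beta>)$i) (sqrt (a i)) (\<theta>$i)))" for \<beta> \<theta>
  define q where "q i s = (if i \<in> range \<sigma> then normal_density 0 (sqrt (a i)) s
      else if a i < D$i then 1 / sqrt (2 * pi * D$i) * normal_density 0 (sqrt (a i)) s
      else 1 / sqrt (2 * pi * a i) * normal_density s (sqrt (D$i)) (y$i))" for i s
  define P where "P \<beta> z = (\<Prod>j\<in>UNIV. ennreal (normal_density ((Y *v \<beta>)$j) (sqrt (D$(\<sigma> j))) (y$(\<sigma> j) - z$(\<sigma> j))))" for \<beta> z
  define Q where "Q z = (\<Prod>i\<in>UNIV. ennreal (q i (z$i)))" for z :: "real^'m"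
  have q0: "0 \<le> q i s" for i s unfolding q_def using D[of i] a[of i] by simp
  have pw: "ennreal (F \<beta> (t \<beta> + z)) \<le> P \<beta> z * Q z" for \<beta> z
  proof -
    define h where "h i = (if i \<in> range \<sigma> then normal_density ((X *v \<beta>)$i) (sqrt (D$i)) (y$i - z$i) else 1)" for i
    have "F \<beta> (t \<beta> + z) \<le> (\<Prod>i\<in>UNIV. h i * q i (z$i))"
      unfolding F_def
    proof (rule prod_mono, safe)
      fix i
      show "0 \<le> normal_density ((t \<beta> + z)$i) (sqrt (D$i)) (y$i) * (w i * normal_density ((X *v \<beta>)$i) (sqrt (a i)) ((t \<beta> + z)$i))"
        using w by simp
      have ndD: "normal_density u (sqrt (D$i)) v \<le> 1 / sqrt (2 * pi * D$i)" for u v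
        using nd_le[of "sqrt (D$i)" u v] D[of i] by simp
      have nda: "normal_density u (sqrt (a i)) v \<le> 1 / sqrt (2 * pi * a i)" for u v
        using nd_le[of "sqrt (a i)" u v] a[of i] by simp
      show "normal_density ((t \<beta> + z)$i) (sqrt (D$i)) (y$i) * (w i * normal_density ((X *v \<beta>)$i) (sqrt (a i)) ((t \<beta> + z)$i))
         \<le> h i * q i (z$i)"
      proof (cases "i \<in> range \<sigma>")
        case True
        then have "(t \<beta> + z)$i = (X *v \<beta>)$i + z$i" by (simp add: t_def T_def)
        then show ?thesis using True w[of i]
          by (simp add: h_def q_def nd_shift1 nd_shift2 mult_left_le_one_le mult_left_mono
              mult_le_one mult_right_le_one_le)
      next
        case False
        show ?thesis
        proof (cases "a i < D$i")
          case True
          then have "(t \<beta> + z)$i = (X *v \<beta>)$i + z$i" by (simp add: t_def T_def)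
          then have "normal_density ((t \<beta> + z)$i) (sqrt (D$i)) (y$i) * (w i * normal_density ((X *v \<beta>)$i) (sqrt (a i)) ((t \<beta> + z)$i))
              = normal_density ((t \<beta> + z)$i) (sqrt (D$i)) (y$i) * (w i * normal_density 0 (sqrt (a i)) (z$i))"
            by (simp add: nd_shift2)
          also have "\<dots> \<le> 1 / sqrt (2 * pi * D$i) * (1 * normal_density 0 (sqrt (a i)) (z$i))"
            using w[of i] ndD D[of i] by (intro mult_mono) (auto simp: less_imp_le)
          finally show ?thesis using False True by (simp add: h_def q_def)
        next
          case False2: False
          then have "(t \<beta> + z)$i = z$i" using False by (simp add: t_def T_def)
          then have "normal_density ((t \<beta> + z)$i) (sqrt (D$i)) (y$i) * (w i * normal_density ((X *v \<beta>)$i) (sqrt (a i)) ((t \<beta> + z)$i))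
              \<le> normal_density (z$i) (sqrt (D$i)) (y$i) * (1 * (1 / sqrt (2 * pi * a i)))"
            using w[of i] nda a[of i] by (intro mult_mono) (auto simp: less_imp_le)
          then show ?thesis using False False2 by (simp add: h_def q_def mult.commute)
        qed
      qed
    qed
    also have "\<dots> = (\<Prod>i\<in>UNIV. h i) * (\<Prod>i\<in>UNIV. q i (z$i))" by (rule prod.distrib)
    also have "(\<Prod>i\<in>UNIV. h i) = (\<Prod>i\<in>range \<sigma>. normal_density ((X *v \<beta>)$i) (sqrt (D$i)) (y$i - z$i))"
      unfolding h_def by (simp add: prod.If_cases Int_absorb1)
    also have "\<dots> = (\<Prod>j\<in>UNIV. normal_density ((Y *v \<beta>)$j) (sqrt (D$(\<sigma> j))) (y$(\<sigma> j) - z$(\<sigma> j)))"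
      by (subst prod.reindex[OF inj\<sigma>]) (simp add: Y)
    finally have le: "F \<beta> (t \<beta> + z) \<le> (\<Prod>j\<in>UNIV. normal_density ((Y *v \<beta>)$j) (sqrt (D$(\<sigma> j))) (y$(\<sigma> j) - z$(\<sigma> j))) * (\<Prod>i\<in>UNIV. q i (z$i))" .
    have "ennreal (F \<beta> (t \<beta> + z)) \<le> ennreal ((\<Prod>j\<in>UNIV. normal_density ((Y *v \<beta>)$j) (sqrt (D$(\<sigma> j))) (y$(\<sigma> j) - z$(\<sigma> j))) * (\<Prod>i\<in>UNIV. q i (z$i)))"
      using le by (rule ennreal_leI)
    also have "\<dots> = P \<beta> z * Q z"
      unfolding P_def Q_def using q0
      by (simp add: ennreal_mult prod_nonneg prod_ennreal)
    finally show ?thesis .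
  qed
  have measF[measurable]: "F \<beta> \<in> borel_measurable borel" for \<beta> unfolding F_def by measurable
  have "(\<integral>\<^sup>+\<beta>. \<integral>\<^sup>+\<theta>. ennreal (F \<beta> \<theta>) \<partial>lborel \<partial>lborel) = (\<integral>\<^sup>+\<beta>. \<integral>\<^sup>+z. ennreal (F \<beta> (t \<beta> + z)) \<partial>lborel \<partial>lborel)"
    by (intro nn_integral_cong nn_integral_translate[symmetric]) measurable
  also have "\<dots> \<le> (\<integral>\<^sup>+\<beta>. \<integral>\<^sup>+z. P \<beta> z * Q z \<partial>lborel \<partial>lborel)"
    by (intro nn_integral_mono pw)
  also have "\<dots> = (\<integral>\<^sup>+z. \<integral>\<^sup>+\<beta>. P \<beta> z * Q z \<partial>lborel \<partial>lborel)"
    by (rule lborel_pair.Fubini') (unfold P_def Q_def q_def, measurable)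
  also have "\<dots> = (\<integral>\<^sup>+z. Q z * \<integral>\<^sup>+\<beta>. P \<beta> z \<partial>lborel \<partial>lborel)"
  proof (intro nn_integral_cong)
    fix z :: "real^'m"
    have "(\<integral>\<^sup>+\<beta>. P \<beta> z * Q z \<partial>lborel) = (\<integral>\<^sup>+\<beta>. Q z * P \<beta> z \<partial>lborel)"
      by (simp add: mult.commute)
    also have "\<dots> = Q z * (\<integral>\<^sup>+\<beta>. P \<beta> z \<partial>lborel)"
      by (rule nn_integral_cmult) (unfold P_def, measurable)
    finally show "(\<integral>\<^sup>+\<beta>. P \<beta> z * Q z \<partial>lborel) = Q z * (\<integral>\<^sup>+\<beta>. P \<beta> z \<partial>lborel)" .
  qed
  also have "\<dots> \<le> (\<integral>\<^sup>+z. Q z * C0 \<partial>lborel)"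
  proof (intro nn_integral_mono mult_left_mono)
    fix z :: "real^'m"
    show "(\<integral>\<^sup>+\<beta>. P \<beta> z \<partial>lborel) \<le> C0"
      using C0[of "\<chi> j. y$(\<sigma> j) - z$(\<sigma> j)"] by (simp add: P_def Y_def)
  qed simp
  also have "\<dots> = C0 * (\<integral>\<^sup>+z. Q z \<partial>lborel)"
    by (subst mult.commute, rule nn_integral_cmult) (unfold Q_def q_def, measurable)
  also have "(\<integral>\<^sup>+z. Q z \<partial>lborel) = (\<Prod>i\<in>UNIV. \<integral>\<^sup>+s. ennreal (q i s) \<partial>lborel)"
    unfolding Q_def by (rule nn_integral_vec_prod) (simp add: q_def)
  also have "\<dots> = (\<Prod>i\<in>UNIV. ennreal (if i \<in> range \<sigma> then 1 else 1 / sqrt (2 * pi * max (a i) (D$i))))"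
  proof (rule prod.cong[OF refl])
    fix i
    have i1: "(\<integral>\<^sup>+s. ennreal (normal_density 0 (sqrt (a i)) s) \<partial>lborel) = 1"
      using a[of i] by (intro nd_int) simp
    have i2: "(\<integral>\<^sup>+s. ennreal (normal_density s (sqrt (D$i)) (y$i)) \<partial>lborel) = 1"
      using D[of i] by (subst nd_sym) (intro nd_int, simp)
    show "(\<integral>\<^sup>+s. ennreal (q i s) \<partial>lborel) = ennreal (if i \<in> range \<sigma> then 1 else 1 / sqrt (2 * pi * max (a i) (D$i)))"
    proof (cases "i \<in> range \<sigma>")
      case True then show ?thesis by (simp add: q_def i1)
    next
      case False
      show ?thesis
      proof (cases "a i < D$i")
        case True
        have "(\<integral>\<^sup>+s. ennreal (q i s) \<partial>lborel) = (\<integral>\<^sup>+s. ennreal (1 / sqrt (2 * pi * D$i)) * ennreal (normal_density 0 (sqrt (a i)) s) \<partial>lborel)"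
          using False True D[of i] by (intro nn_integral_cong) (simp add: q_def flip: ennreal_mult)
        also have "\<dots> = ennreal (1 / sqrt (2 * pi * D$i))"
          by (subst nn_integral_cmult) (simp_all add: i1)
        finally show ?thesis using False True by (simp add: max_def)
      next
        case False2: False
        have "(\<integral>\<^sup>+s. ennreal (q i s) \<partial>lborel) = (\<integral>\<^sup>+s. ennreal (1 / sqrt (2 * pi * a i)) * ennreal (normal_density s (sqrt (D$i)) (y$i)) \<partial>lborel)"
          using False False2 a[of i] by (intro nn_integral_cong) (simp add: q_def flip: ennreal_mult)
        also have "\<dots> = ennreal (1 / sqrt (2 * pi * a i))"
          by (subst nn_integral_cmult) (simp_all add: i2)
        finally show ?thesis using False False2 by (simp add: max_def)
      qed
    qed
  qed
  finally show ?thesis unfolding F_def .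
qed



lemma joint_meas[measurable]:
  "(\<lambda>z. case z of (\<theta>, \<beta>, A1, A2, p) \<Rightarrow> fh_mix_joint y X D \<alpha>1 \<alpha>2 \<theta> \<delta> \<beta> A1 A2 p)
    \<in> borel_measurable (lborel \<Otimes>\<^sub>M lborel \<Otimes>\<^sub>M lborel \<Otimes>\<^sub>M lborel \<Otimes>\<^sub>M (lborel :: real measure))"
  unfolding fh_mix_joint_def by measurable

lemma pos_part:
  fixes X :: "real^'r^'m" and D y :: "real^'m"
  assumes D: "\<And>i. D $ i > 0"
  shows "0 < (\<integral>\<^sup>+ z. ennreal (case z of (\<theta>, \<beta>, A1, A2, p) \<Rightarrow> fh_mix_joint y X D \<alpha>1 \<alpha>2 \<theta> \<delta> \<beta> A1 A2 p)
        \<partial>(lborel \<Otimes>\<^sub>M lborel \<Otimes>\<^sub>M lborel \<Otimes>\<^sub>M lborel \<Otimes>\<^sub>M (lborel :: real measure)))"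
    (is "0 < integral\<^sup>N ?M ?f")
proof (rule ccontr)
  assume "\<not> 0 < integral\<^sup>N ?M ?f"
  then have "integral\<^sup>N ?M ?f = 0" by (simp add: not_gr_zero)
  then have "AE z in ?M. ?f z = 0" by (subst (asm) nn_integral_0_iff_AE) auto
  then obtain N where N: "{z \<in> space ?M. \<not> ?f z = 0} \<subseteq> N" "N \<in> sets ?M" "emeasure ?M N = 0"
    by (auto elim!: AE_E)
  define B where "B = (UNIV :: (real^'m) set) \<times> (UNIV :: (real^'r) set) \<times> {1<..<2::real} \<times> {3<..<4::real} \<times> {0<..<1::real}"
  have "B \<subseteq> {z \<in> space ?M. \<not> ?f z = 0}"
  proof
    fix z assume "z \<in> B"
    then obtain \<theta> \<beta> A1 A2 p where z: "z = (\<theta>, \<beta>, A1, A2, p)"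
      and r: "1 < A1" "A1 < 2" "3 < A2" "A2 < 4" "0 < p" "p < 1"
      by (auto simp: B_def)
    have "fh_mix_joint y X D \<alpha>1 \<alpha>2 \<theta> \<delta> \<beta> A1 A2 p > 0"
      unfolding fh_mix_joint_def using r D
      by (auto intro!: prod_pos mult_pos_pos normal_density_pos)
    then show "z \<in> {z \<in> space ?M. \<not> ?f z = 0}" by (simp add: z space_pair_measure)
  qed
  then have "B \<subseteq> N" using N(1) by blast
  then have "emeasure ?M B \<le> emeasure ?M N" by (intro emeasure_mono N(2))
  moreover have "emeasure ?M B = \<infinity>"
  proof -
    have sf1: "sigma_finite_measure (lborel :: real measure)" by (rule sigma_finite_lborel)
    have sf2: "sigma_finite_measure ((lborel :: real measure) \<Otimes>\<^sub>M (lborel :: real measure))"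
      by (rule sigma_finite_pair_measure[OF sf1 sf1])
    have sf3: "sigma_finite_measure ((lborel :: real measure) \<Otimes>\<^sub>M (lborel :: real measure) \<Otimes>\<^sub>M (lborel :: real measure))"
      by (rule sigma_finite_pair_measure[OF sf1 sf2])
    have sf4: "sigma_finite_measure ((lborel :: (real^'r) measure) \<Otimes>\<^sub>M (lborel :: real measure) \<Otimes>\<^sub>M (lborel :: real measure) \<Otimes>\<^sub>M (lborel :: real measure))"
      by (rule sigma_finite_pair_measure[OF sigma_finite_lborel sf3])
    show ?thesis unfolding B_def
      by (simp add: sigma_finite_measure.emeasure_pair_measure_Times[OF sf1]
          sigma_finite_measure.emeasure_pair_measure_Times[OF sf2]
          sigma_finite_measure.emeasure_pair_measure_Times[OF sf3]
          sigma_finite_measure.emeasure_pair_measure_Times[OF sf4] ennreal_top_mult)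
  qed
  ultimately show False using N(3) by simp
qed



lemma int_powr_0:
  assumes "e > -1" "dd \<ge> 0" "K \<ge> 0"
  shows "(\<integral>\<^sup>+x. indicator {0..dd} x * ennreal (K * x powr e) \<partial>lborel) = ennreal (K * (dd powr (e+1) / (e+1)))"
proof -
  have "((\<lambda>x. K * x powr e) has_integral (K * (dd powr (e+1) / (e+1)))) {0..dd}"
    using has_integral_powr_from_0[OF assms(1,2)] by (rule has_integral_mult_right)
  then have "integral\<^sup>N lborel (\<lambda>x. indicator {0..dd} x * (K * x powr e)) = K * (dd powr (e+1) / (e+1))"
    by (rule nn_integral_has_integral_lebesgue[rotated]) (use assms in auto)
  then show ?thesis by (simp add: indicator_mult_ennreal)
qed

lemma int_powr_inf:
  assumes "e < -1" "dd > 0" "K \<ge> 0"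
  shows "(\<integral>\<^sup>+x. indicator {dd..} x * ennreal (K * x powr e) \<partial>lborel) = ennreal (K * (-(dd powr (e+1)) / (e+1)))"
proof -
  have "((\<lambda>x. K * x powr e) has_integral (K * (-(dd powr (e+1)) / (e+1)))) {dd..}"
    using has_integral_powr_to_inf[OF assms(1,2)] by (rule has_integral_mult_right)
  then have "integral\<^sup>N lborel (\<lambda>x. indicator {dd..} x * (K * x powr e)) = K * (-(dd powr (e+1)) / (e+1))"
    by (rule nn_integral_has_integral_lebesgue[rotated]) (use assms in auto)
  then show ?thesis by (simp add: indicator_mult_ennreal)
qed



lemma A_int_fin:
  fixes \<alpha>1 \<alpha>2 c dd kk :: real
  assumes a12: "\<alpha>1 + \<alpha>2 < 2" and a2: "1 < \<alpha>2" and kk: "2 - \<alpha>1 - \<alpha>2 < kk / 2" and dd: "dd > 0" and c: "c \<ge> 0"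
  shows "(\<integral>\<^sup>+q. ennreal (case q of (A1, A2, p) \<Rightarrow> if 0 < A1 \<and> A1 < A2 \<and> 0 < p \<and> p < 1
            then c * A1 powr (-\<alpha>1) * A2 powr (-\<alpha>2) * max A1 dd powr (-kk/2) else 0)
          \<partial>(lborel \<Otimes>\<^sub>M (lborel \<Otimes>\<^sub>M (lborel::real measure)))) < \<infinity>"
proof -
  define h where "h A1 A2 p = (if 0 < A1 \<and> A1 < A2 \<and> 0 < p \<and> p < 1
            then c * A1 powr (-\<alpha>1) * A2 powr (-\<alpha>2) * max A1 dd powr (-kk/2) else 0)" for A1 A2 p :: real
  define g where "g A1 A2 = (if 0 < A1 \<and> A1 < A2
            then c * A1 powr (-\<alpha>1) * A2 powr (-\<alpha>2) * max A1 dd powr (-kk/2) else 0)" for A1 A2 :: real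
  define G1 where "G1 A1 = (if 0 < A1 then c * A1 powr (-\<alpha>1) * max A1 dd powr (-kk/2) * (-(A1 powr (-\<alpha>2 + 1)) / (-\<alpha>2 + 1)) else 0)" for A1 :: real
  define K1 where "K1 = c / (\<alpha>2 - 1) * dd powr (-kk/2)"
  define K2 where "K2 = c / (\<alpha>2 - 1)"
  define e1 where "e1 = -\<alpha>1 + (-\<alpha>2 + 1)"
  define e2 where "e2 = -\<alpha>1 + (-kk/2) + (-\<alpha>2 + 1)"
  have K1: "K1 \<ge> 0" and K2: "K2 \<ge> 0" using c a2 by (auto simp: K1_def K2_def)
  have e1: "e1 > -1" using a12 by (simp add: e1_def)
  have e2: "e2 < -1" using kk by (simp add: e2_def)
  have sf1: "sigma_finite_measure (lborel :: real measure)" by (rule sigma_finite_lborel)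
  have sf2: "sigma_finite_measure ((lborel :: real measure) \<Otimes>\<^sub>M (lborel :: real measure))"
    by (rule sigma_finite_pair_measure[OF sf1 sf1])
  have hm[measurable]: "(\<lambda>(A1, A2, p). h A1 A2 p) \<in> borel_measurable (lborel \<Otimes>\<^sub>M (lborel \<Otimes>\<^sub>M (lborel::real measure)))"
    unfolding h_def by measurable
  have "(\<integral>\<^sup>+q. ennreal (case q of (A1, A2, p) \<Rightarrow> h A1 A2 p) \<partial>(lborel \<Otimes>\<^sub>M (lborel \<Otimes>\<^sub>M (lborel::real measure))))
      = (\<integral>\<^sup>+A1. (\<integral>\<^sup>+w. ennreal (case w of (A2, p) \<Rightarrow> h A1 A2 p) \<partial>(lborel \<Otimes>\<^sub>M (lborel::real measure))) \<partial>lborel)"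
  proof -
    have m: "(\<lambda>q. ennreal (case q of (A1, A2, p) \<Rightarrow> h A1 A2 p)) \<in> borel_measurable (lborel \<Otimes>\<^sub>M (lborel \<Otimes>\<^sub>M (lborel::real measure)))"
      unfolding h_def by measurable
    show ?thesis using sigma_finite_measure.nn_integral_fst[OF sf2 m] by (simp add: case_prod_beta')
  qed
  also have "\<dots> = (\<integral>\<^sup>+A1. (\<integral>\<^sup>+A2. (\<integral>\<^sup>+p. ennreal (h A1 A2 p) \<partial>lborel) \<partial>lborel) \<partial>lborel)"
  proof (intro nn_integral_cong)
    fix A1 :: real
    have m: "(\<lambda>w. ennreal (case w of (A2, p) \<Rightarrow> h A1 A2 p)) \<in> borel_measurable (lborel \<Otimes>\<^sub>M (lborel::real measure))"
      unfolding h_def by measurable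
    show "(\<integral>\<^sup>+w. ennreal (case w of (A2, p) \<Rightarrow> h A1 A2 p) \<partial>(lborel \<Otimes>\<^sub>M (lborel::real measure)))
        = (\<integral>\<^sup>+A2. (\<integral>\<^sup>+p. ennreal (h A1 A2 p) \<partial>lborel) \<partial>lborel)"
      using sigma_finite_measure.nn_integral_fst[OF sf1 m] by (simp add: case_prod_beta')
  qed
  also have "\<dots> \<le> (\<integral>\<^sup>+A1. ennreal (G1 A1) \<partial>lborel)"
  proof (intro nn_integral_mono)
    fix A1 :: real
    have b: "(\<integral>\<^sup>+p. ennreal (h A1 A2 p) \<partial>lborel) = ennreal (g A1 A2)" for A2
    proof -
      have "(\<integral>\<^sup>+p. ennreal (h A1 A2 p) \<partial>lborel) = (\<integral>\<^sup>+p. ennreal (g A1 A2) * indicator {0<..<1::real} p \<partial>lborel)"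
        by (intro nn_integral_cong) (simp add: h_def g_def split: split_indicator)
      also have "\<dots> = ennreal (g A1 A2)" by (simp add: nn_integral_cmult_indicator)
      finally show ?thesis .
    qed
    show "(\<integral>\<^sup>+A2. (\<integral>\<^sup>+p. ennreal (h A1 A2 p) \<partial>lborel) \<partial>lborel) \<le> ennreal (G1 A1)"
    proof (cases "0 < A1")
      case False
      then show ?thesis by (simp add: b g_def)
    next
      case True
      define c1 where "c1 = c * A1 powr (-\<alpha>1) * max A1 dd powr (-kk/2)"
      have c1: "c1 \<ge> 0" using c by (simp add: c1_def)
      have "(\<integral>\<^sup>+A2. (\<integral>\<^sup>+p. ennreal (h A1 A2 p) \<partial>lborel) \<partial>lborel)
          \<le> (\<integral>\<^sup>+A2. ennreal c1 * (indicator {A1..} A2 * ennreal (1 * A2 powr (-\<alpha>2))) \<partial>lborel)"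
        unfolding b
      proof (intro nn_integral_mono)
        fix A2 :: real
        show "ennreal (g A1 A2) \<le> ennreal c1 * (indicator {A1..} A2 * ennreal (1 * A2 powr (-\<alpha>2)))"
        proof (cases "A1 < A2")
          case lt: True
          have "g A1 A2 = c1 * A2 powr (-\<alpha>2)" using True lt by (simp add: g_def c1_def mult_ac)
          then show ?thesis using lt c1 by (simp add: ennreal_mult)
        next
          case False
          then show ?thesis by (simp add: g_def)
        qed
      qed
      also have "\<dots> = ennreal c1 * (\<integral>\<^sup>+A2. indicator {A1..} A2 * ennreal (1 * A2 powr (-\<alpha>2)) \<partial>lborel)"
        by (rule nn_integral_cmult) measurable
      also have "(\<integral>\<^sup>+A2. indicator {A1..} A2 * ennreal (1 * A2 powr (-\<alpha>2)) \<partial>lborel)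
          = ennreal (1 * (-(A1 powr (-\<alpha>2 + 1)) / (-\<alpha>2 + 1)))"
        using a2 True by (intro int_powr_inf) auto
      also have "ennreal c1 * \<dots> = ennreal (G1 A1)"
      proof -
        have nn: "0 \<le> -(A1 powr (-\<alpha>2 + 1)) / (-\<alpha>2 + 1)"
          using a2 by (intro divide_nonpos_neg) auto
        have "ennreal c1 * ennreal (1 * (-(A1 powr (-\<alpha>2 + 1)) / (-\<alpha>2 + 1)))
            = ennreal (c1 * (1 * (-(A1 powr (-\<alpha>2 + 1)) / (-\<alpha>2 + 1))))"
          using c1 nn by (subst ennreal_mult) simp_all
        also have "c1 * (1 * (-(A1 powr (-\<alpha>2 + 1)) / (-\<alpha>2 + 1))) = G1 A1"
          using True by (simp add: G1_def c1_def)
        finally show ?thesis .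
      qed
      finally show ?thesis .
    qed
  qed
  also have "\<dots> \<le> (\<integral>\<^sup>+A1. indicator {0..dd} A1 * ennreal (K1 * A1 powr e1) + indicator {dd..} A1 * ennreal (K2 * A1 powr e2) \<partial>lborel)"
  proof (intro nn_integral_mono)
    fix A1 :: real
    show "ennreal (G1 A1) \<le> indicator {0..dd} A1 * ennreal (K1 * A1 powr e1) + indicator {dd..} A1 * ennreal (K2 * A1 powr e2)"
    proof (cases "0 < A1")
      case False then show ?thesis by (simp add: G1_def)
    next
      case True
      show ?thesis
      proof (cases "A1 \<le> dd")
        case le: True
        have q: "-(x / (1 - \<alpha>2)) = x / (\<alpha>2 - 1)" for x
          using a2 by (simp add: divide_simps algebra_simps)
        have "G1 A1 = c * A1 powr (-\<alpha>1) * dd powr (-kk/2) * (A1 powr (-\<alpha>2 + 1) / (\<alpha>2 - 1))"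
          using True le by (simp add: G1_def max_def q)
        also have "\<dots> = K1 * A1 powr e1"
        proof -
          have pw: "A1 powr e1 = A1 powr (-\<alpha>1) * A1 powr (-\<alpha>2 + 1)"
            unfolding e1_def by (rule powr_add)
          show ?thesis unfolding K1_def pw by (simp add: mult_ac)
        qed
        finally have "G1 A1 = K1 * A1 powr e1" .
        then show ?thesis using True le by (simp add: add_increasing2)
      next
        case gt: False
        have q: "-(x / (1 - \<alpha>2)) = x / (\<alpha>2 - 1)" for x
          using a2 by (simp add: divide_simps algebra_simps)
        have "G1 A1 = c * A1 powr (-\<alpha>1) * A1 powr (-kk/2) * (A1 powr (-\<alpha>2 + 1) / (\<alpha>2 - 1))"
          using True gt by (simp add: G1_def max_def q)
        also have "\<dots> = K2 * A1 powr e2"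
        proof -
          have pw: "A1 powr e2 = A1 powr (-\<alpha>1) * A1 powr (-kk/2) * A1 powr (-\<alpha>2 + 1)"
            unfolding e2_def by (simp only: powr_add)
          show ?thesis unfolding K2_def pw by (simp add: mult_ac)
        qed
        finally have "G1 A1 = K2 * A1 powr e2" .
        then show ?thesis using True gt by simp
      qed
    qed
  qed
  also have "\<dots> = (\<integral>\<^sup>+A1. indicator {0..dd} A1 * ennreal (K1 * A1 powr e1) \<partial>lborel) + (\<integral>\<^sup>+A1. indicator {dd..} A1 * ennreal (K2 * A1 powr e2) \<partial>lborel)"
    by (rule nn_integral_add) measurable
  also have "\<dots> = ennreal (K1 * (dd powr (e1+1) / (e1+1))) + ennreal (K2 * (-(dd powr (e2+1)) / (e2+1)))"
    using int_powr_0[OF e1 _ K1, of dd] int_powr_inf[OF e2 dd K2] dd by simp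
  also have "\<dots> < \<infinity>" by simp
  finally show ?thesis unfolding h_def .
qed



lemma prod_bound:
  fixes R :: "'m::finite set" and v :: "'m \<Rightarrow> real" and x :: real
  assumes x: "x > 0" and v: "\<And>i. i \<notin> R \<Longrightarrow> 0 \<le> v i \<and> v i \<le> 1 / sqrt x"
  shows "(\<Prod>i\<in>UNIV. ennreal (if i \<in> R then 1 else v i)) \<le> ennreal (x powr (- real (card (UNIV - R)) / 2))"
proof -
  have nn: "0 \<le> (if i \<in> R then 1 else v i)" for i using v[of i] by auto
  have "(\<Prod>i\<in>UNIV. ennreal (if i \<in> R then 1 else v i)) = ennreal (\<Prod>i\<in>UNIV. (if i \<in> R then 1 else v i))"
    using nn by (simp add: prod_ennreal)
  also have "(\<Prod>i\<in>UNIV. (if i \<in> R then 1 else v i)) \<le> (\<Prod>i\<in>UNIV. (if i \<in> R then 1 else 1 / sqrt x))"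
    using nn v by (intro prod_mono) auto
  also have "\<dots> = (1 / sqrt x) ^ card (UNIV - R)"
    by (simp add: prod.If_cases Compl_eq_Diff_UNIV)
  also have "1 / sqrt x = x powr (-(1/2))"
    using x by (simp add: powr_minus_divide powr_half_sqrt)
  also have "(x powr (-(1/2))) ^ card (UNIV - R) = x powr (- real (card (UNIV - R)) / 2)"
    using x by (simp add: powr_power)
  finally show ?thesis using ennreal_leI by blast
qed



lemma fin_part:
  fixes X :: "real^'r^'m" and D y :: "real^'m" and \<alpha>1 \<alpha>2 :: real and \<delta> :: "'m \<Rightarrow> bool"
  assumes rk: "rank X = CARD('r)"
    and D: "\<forall>i. D $ i > 0"
    and a1: "\<alpha>1 < 1" and a2: "1 < \<alpha>2"
    and m: "real CARD('m) > real CARD('r) + 2 * (2 - \<alpha>1 - \<alpha>2)"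
    and a12: "2 - \<alpha>1 - \<alpha>2 > 0"
  shows "(\<integral>\<^sup>+ z. ennreal (case z of (\<theta>, \<beta>, A1, A2, p) \<Rightarrow> fh_mix_joint y X D \<alpha>1 \<alpha>2 \<theta> \<delta> \<beta> A1 A2 p)
        \<partial>(lborel \<Otimes>\<^sub>M lborel \<Otimes>\<^sub>M lborel \<Otimes>\<^sub>M lborel \<Otimes>\<^sub>M (lborel :: real measure))) < \<infinity>"
proof -
  obtain \<sigma> :: "'r \<Rightarrow> 'm" where inj\<sigma>: "inj \<sigma>" and injY: "inj ((*v) (\<chi> j. X $ (\<sigma> j)))"
    using select_rows[OF rk] by blast
  obtain C0 where C0f: "C0 < \<infinity>" and C0: "\<And>c::real^'r. (\<integral>\<^sup>+\<beta>. (\<Prod>j\<in>UNIV. ennreal (normal_density (((\<chi> j. X $ (\<sigma> j)) *v \<beta>)$j) (sqrt (D$(\<sigma> j))) (c$j))) \<partial>lborel) \<le> C0"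
    using beta_bound[OF injY, of "\<lambda>j. D$(\<sigma> j)"] D by blast
  define dd where "dd = Min (range (\<lambda>i. D$i))"
  have dd: "dd > 0" unfolding dd_def using D by simp
  have ddle: "dd \<le> D$i" for i unfolding dd_def by simp
  define k where "k = card (UNIV - range \<sigma>)"
  have ck: "card (range \<sigma>) = CARD('r)" using inj\<sigma> by (simp add: card_image)
  have "k = CARD('m) - CARD('r)" unfolding k_def using ck by (simp add: card_Diff_subset)
  moreover have "CARD('r) \<le> CARD('m)" using ck card_mono[of UNIV "range \<sigma>"] by simp
  ultimately have kr: "real k = real CARD('m) - real CARD('r)" by simp
  define kk where "kk = real k"
  have kk: "2 - \<alpha>1 - \<alpha>2 < kk / 2" using m kr by (simp add: kk_def)
  define H where "H A1 A2 p = (if 0 < A1 \<and> A1 < A2 \<and> 0 < p \<and> p < 1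
            then 1 * A1 powr (-\<alpha>1) * A2 powr (-\<alpha>2) * max A1 dd powr (-kk/2) else 0)" for A1 A2 p :: real
  define f where "f = (\<lambda>z. ennreal (case z of (\<theta>, \<beta>, A1, A2, p) \<Rightarrow> fh_mix_joint y X D \<alpha>1 \<alpha>2 \<theta> \<delta> \<beta> A1 A2 p))"
  have fm[measurable]: "f \<in> borel_measurable (lborel \<Otimes>\<^sub>M lborel \<Otimes>\<^sub>M lborel \<Otimes>\<^sub>M lborel \<Otimes>\<^sub>M (lborel :: real measure))"
    unfolding f_def by measurable
  have sf1: "sigma_finite_measure (lborel :: real measure)" by (rule sigma_finite_lborel)
  have sf2: "sigma_finite_measure ((lborel :: real measure) \<Otimes>\<^sub>M (lborel :: real measure))"
    by (rule sigma_finite_pair_measure[OF sf1 sf1])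
  have sf3: "sigma_finite_measure ((lborel :: real measure) \<Otimes>\<^sub>M (lborel :: real measure) \<Otimes>\<^sub>M (lborel :: real measure))"
    by (rule sigma_finite_pair_measure[OF sf1 sf2])
  have sf4: "sigma_finite_measure ((lborel :: (real^'r) measure) \<Otimes>\<^sub>M (lborel :: real measure) \<Otimes>\<^sub>M (lborel :: real measure) \<Otimes>\<^sub>M (lborel :: real measure))"
    by (rule sigma_finite_pair_measure[OF sigma_finite_lborel sf3])
  interpret P4: pair_sigma_finite "lborel :: (real^'m) measure" "(lborel :: (real^'r) measure) \<Otimes>\<^sub>M (lborel :: real measure) \<Otimes>\<^sub>M (lborel :: real measure) \<Otimes>\<^sub>M (lborel :: real measure)"
    by (intro pair_sigma_finite.intro sigma_finite_lborel sf4)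
  interpret P3: pair_sigma_finite "lborel :: (real^'r) measure" "(lborel :: real measure) \<Otimes>\<^sub>M (lborel :: real measure) \<Otimes>\<^sub>M (lborel :: real measure)"
    by (intro pair_sigma_finite.intro sigma_finite_lborel sf3)
  have "integral\<^sup>N (lborel \<Otimes>\<^sub>M lborel \<Otimes>\<^sub>M lborel \<Otimes>\<^sub>M lborel \<Otimes>\<^sub>M (lborel :: real measure)) f
      = (\<integral>\<^sup>+w. (\<integral>\<^sup>+\<theta>. f (\<theta>, w) \<partial>lborel) \<partial>(lborel \<Otimes>\<^sub>M lborel \<Otimes>\<^sub>M lborel \<Otimes>\<^sub>M (lborel :: real measure)))"
    by (rule P4.nn_integral_snd[symmetric]) (rule fm)
  also have "\<dots> = (\<integral>\<^sup>+q. (\<integral>\<^sup>+\<beta>. (\<integral>\<^sup>+\<theta>. f (\<theta>, \<beta>, q) \<partial>lborel) \<partial>lborel) \<partial>(lborel \<Otimes>\<^sub>M lborel \<Otimes>\<^sub>M (lborel :: real measure)))"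
  proof -
    have "(\<lambda>w. \<integral>\<^sup>+\<theta>. f (\<theta>, w) \<partial>lborel) \<in> borel_measurable ((lborel :: (real^'r) measure) \<Otimes>\<^sub>M lborel \<Otimes>\<^sub>M lborel \<Otimes>\<^sub>M (lborel :: real measure))"
      unfolding f_def by measurable
    from P3.nn_integral_snd[OF this] show ?thesis by simp
  qed
  also have "\<dots> \<le> (\<integral>\<^sup>+q. C0 * ennreal (case q of (A1, A2, p) \<Rightarrow> H A1 A2 p) \<partial>(lborel \<Otimes>\<^sub>M lborel \<Otimes>\<^sub>M (lborel :: real measure)))"
  proof (intro nn_integral_mono)
    fix q :: "real \<times> real \<times> real"
    obtain A1 A2 p where q: "q = (A1, A2, p)" by (cases q) auto
    show "(\<integral>\<^sup>+\<beta>. (\<integral>\<^sup>+\<theta>. f (\<theta>, \<beta>, q) \<partial>lborel) \<partial>lborel) \<le> C0 * ennreal (case q of (A1, A2, p) \<Rightarrow> H A1 A2 p)"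
    proof (cases "0 < A1 \<and> A1 < A2 \<and> 0 < p \<and> p < 1")
      case False
      then have "f (\<theta>, \<beta>, q) = 0" for \<theta> \<beta> unfolding f_def fh_mix_joint_def q by auto
      then show ?thesis by simp
    next
      case True
      then have r: "0 < A1" "A1 < A2" "0 < p" "p < 1" by auto
      define a where "a i = (if \<delta> i then A2 else A1)" for i
      define w where "w i = (if \<delta> i then 1 - p else p)" for i
      define cst where "cst = A1 powr (-\<alpha>1) * A2 powr (-\<alpha>2)"
      define Pi where "Pi \<theta> \<beta> = (\<Prod>i\<in>UNIV. normal_density (\<theta>$i) (sqrt (D$i)) (y$i) * (w i * normal_density ((X *v \<beta>)$i) (sqrt (a i)) (\<theta>$i)))" for \<theta> \<beta>
      have a: "a i > 0" "A1 \<le> a i" for i using r by (auto simp: a_def)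
      have w: "0 \<le> w i" "w i \<le> 1" for i using r by (auto simp: w_def)
      have cst: "cst \<ge> 0" by (simp add: cst_def)
      have Pi0: "Pi \<theta> \<beta> \<ge> 0" for \<theta> \<beta> unfolding Pi_def using w by (intro prod_nonneg) simp
      have fe: "f (\<theta>, \<beta>, q) = ennreal (Pi \<theta> \<beta>) * ennreal cst" for \<theta> \<beta>
      proof -
        have "(\<Prod>i\<in>UNIV. normal_density (\<theta>$i) (sqrt (D$i)) (y$i) *
           (if \<delta> i then (1 - p) * normal_density ((X *v \<beta>) $ i) (sqrt A2) (\<theta> $ i)
            else p * normal_density ((X *v \<beta>) $ i) (sqrt A1) (\<theta> $ i))) = Pi \<theta> \<beta>"
          unfolding Pi_def by (intro prod.cong refl) (simp add: a_def w_def)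
        then have "f (\<theta>, \<beta>, q) = ennreal (Pi \<theta> \<beta> * cst)"
          using True by (simp add: f_def fh_mix_joint_def q cst_def mult.assoc)
        then show ?thesis using Pi0 cst by (simp add: ennreal_mult)
      qed
      have PiM[measurable]: "(\<lambda>(\<beta>, \<theta>). Pi \<theta> \<beta>) \<in> borel_measurable (lborel \<Otimes>\<^sub>M lborel)"
        unfolding Pi_def by measurable
      have "(\<integral>\<^sup>+\<beta>. (\<integral>\<^sup>+\<theta>. f (\<theta>, \<beta>, q) \<partial>lborel) \<partial>lborel)
          = (\<integral>\<^sup>+\<beta>. (\<integral>\<^sup>+\<theta>. ennreal (Pi \<theta> \<beta>) \<partial>lborel) * ennreal cst \<partial>lborel)"
        unfolding fe by (intro nn_integral_cong nn_integral_multc) (unfold Pi_def, measurable)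
      also have "\<dots> = (\<integral>\<^sup>+\<beta>. (\<integral>\<^sup>+\<theta>. ennreal (Pi \<theta> \<beta>) \<partial>lborel) \<partial>lborel) * ennreal cst"
        by (rule nn_integral_multc) (unfold Pi_def, measurable)
      also have "\<dots> \<le> (C0 * (\<Prod>i\<in>UNIV. ennreal (if i \<in> range \<sigma> then 1 else 1 / sqrt (2 * pi * max (a i) (D$i))))) * ennreal cst"
        unfolding Pi_def
        by (intro mult_right_mono inner_bound[OF _ _ _ _ inj\<sigma> C0]) (use D a w in auto)
      also have "\<dots> \<le> (C0 * ennreal (max A1 dd powr (- real (card (UNIV - range \<sigma>)) / 2))) * ennreal cst"
      proof (intro mult_right_mono mult_left_mono prod_bound)
        show "0 < max A1 dd" using dd by simp
        fix i assume "i \<notin> range \<sigma>"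
        have "max A1 dd \<le> max (a i) (D$i)" using a(2)[of i] ddle[of i] by auto
        also have "\<dots> \<le> 2 * pi * max (a i) (D$i)"
        proof -
          have "1 \<le> 2 * pi" using pi_gt3 by simp
          then show ?thesis using a(1)[of i] D by (intro mult_le_cancel_right1[THEN iffD2]) auto
        qed
        finally have le: "max A1 dd \<le> 2 * pi * max (a i) (D$i)" .
        have "1 / sqrt (2 * pi * max (a i) (D$i)) \<le> 1 / sqrt (max A1 dd)"
          using le dd by (intro divide_left_mono real_sqrt_le_mono mult_pos_pos) auto
        then show "0 \<le> (1 / sqrt (2 * pi * max (a i) (D$i))) \<and> 1 / sqrt (2 * pi * max (a i) (D$i)) \<le> 1 / sqrt (max A1 dd)"
          using a(1)[of i] by (simp add: max_def)
      qed simp_all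
      also have "\<dots> = C0 * ennreal (H A1 A2 p)"
        using True cst by (simp add: H_def cst_def kk_def k_def ennreal_mult[symmetric] mult_ac)
      finally show ?thesis by (simp add: q)
    qed
  qed
  also have "\<dots> = C0 * (\<integral>\<^sup>+q. ennreal (case q of (A1, A2, p) \<Rightarrow> H A1 A2 p) \<partial>(lborel \<Otimes>\<^sub>M lborel \<Otimes>\<^sub>M (lborel :: real measure)))"
    by (rule nn_integral_cmult) (unfold H_def, measurable)
  also have "\<dots> < \<infinity>"
  proof -
    have "(\<integral>\<^sup>+q. ennreal (case q of (A1, A2, p) \<Rightarrow> H A1 A2 p) \<partial>(lborel \<Otimes>\<^sub>M lborel \<Otimes>\<^sub>M (lborel :: real measure))) < \<infinity>"
      unfolding H_def using A_int_fin[of \<alpha>1 \<alpha>2 kk dd 1] a12 a2 kk dd by simp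
    then show ?thesis using C0f by (simp add: ennreal_mult_less_top)
  qed
  finally show ?thesis unfolding f_def .
qed


theorem theorem1:
  fixes X :: "real^'r^'m" and D y :: "real^'m" and \<alpha>1 \<alpha>2 :: real
  assumes "rank X = CARD('r)"
    and "\<forall>i. D $ i > 0"
    and "\<alpha>1 < 1" and "1 < \<alpha>2"
    and "real CARD('m) > real CARD('r) + 2 * (2 - \<alpha>1 - \<alpha>2)"
    and "2 - \<alpha>1 - \<alpha>2 > 0"
  shows "0 < fh_mix_total y X D \<alpha>1 \<alpha>2 \<and> fh_mix_total y X D \<alpha>1 \<alpha>2 < \<infinity>"
proof
  show "fh_mix_total y X D \<alpha>1 \<alpha>2 < \<infinity>"
    unfolding fh_mix_total_def using fin_part[OF assms] by simp
  have "0 < (\<integral>\<^sup>+ z. ennreal (case z of (\<theta>, \<beta>, A1, A2, p) \<Rightarrow> fh_mix_joint y X D \<alpha>1 \<alpha>2 \<theta> (\<lambda>_. False) \<beta> A1 A2 p)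
        \<partial>(lborel \<Otimes>\<^sub>M lborel \<Otimes>\<^sub>M lborel \<Otimes>\<^sub>M lborel \<Otimes>\<^sub>M (lborel :: real measure)))"
    using assms(2) by (intro pos_part) auto
  also have "\<dots> \<le> fh_mix_total y X D \<alpha>1 \<alpha>2"
    unfolding fh_mix_total_def by (rule member_le_sum) auto
  finally show "0 < fh_mix_total y X D \<alpha>1 \<alpha>2" .
qed

end
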